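(* (a) Let $F',F''$ be first-order formulas over $L=\{A_1,\dots,A_n\}\cup\{f_1,\dots,f_m\}$ (without $*$). Then $F'*F''$ is satisfiable iff the first-order formula over the vocabulary $L\cup\{A'_i,A''_i\}_{i\le n}\cup\{f'_i,f''_i\}_{i\le m}$ (fresh unary $A'_i,A''_i$, fresh binary $f'_i,f''_i$) $$\bigwedge_{i=1}^n\forall x.\big((A_i(x)\leftrightarrow A'_i(x)\vee A''_i(x))\wedge\neg(A'_i(x)\wedge A''_i(x))\big)\wedge\bigwedge_{i=1}^m\forall x\,y.\big((f_i(x,y)\leftrightarrow f'_i(x,y)\vee f''_i(x,y))\wedge\neg(f'_i(x,y)\wedge f''_i(x,y))\big)\wedge F'[A_i:=A'_i,f_i:=f'_i]\wedge F''[A_i:=A''_i,f_i:=f''_i]$$ is satisfiable. (b) Let $\mathcal I$ be the smallest class of formulas containing all formulas of two-variable first-order logic with counting $C^2$ over $L$ and closed under $F_1,F_2\mapsto F_1*F_2$ and $F_1,F_2\mapsto F_1\vee F_2$. Then satisfiability of formulas in $\mathcal I$ is decidable: each $F\in\mathcal I$ is equisatisfiable with an effectively computable $C^2$ formula over an extended vocabulary.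
   Context: Formulas are first-order logic with equality (and, where stated, counting quantifiers $\exists^{\ge k}x.G$, $\exists^{=k}x.G$) over a finite vocabulary of unary and binary predicate symbols; equality is interpreted as identity and is not split. Environments (structures) have finite nonempty domains; satisfiable means true in some such environment. Spatial conjunction: $F_1*F_2$ holds in $e$ iff there are $e_1,e_2$ with the same domain and variable assignment such that each predicate symbol's interpretation in $e$ is the disjoint union of its interpretations in $e_1$ and $e_2$, with $F_1$ true in $e_1$ and $F_2$ true in $e_2$. $G[P:=Q]$ denotes syntactic replacement of the symbol $P$ by $Q$. $C^2$ is the set of first-order formulas with counting quantifiers that use only two variable names (which may be reused by nested quantification); satisfiability of $C^2$ formulas (over finite structures) is decidable. *)

theory Defs
  imports Main
begin

text \<open>Variables, unary predicate symbols and binary predicate symbols are all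
named by natural numbers (unary and binary symbols live in separate name spaces).\<close>

datatype fm =
    Top
  | UPred nat nat
  | Bin nat nat nat
  | Eq nat nat
  | Neg fm
  | Conj fm fm
  | Disj fm fm
  | Ex nat fm
  | All nat fm
  | CntGe nat nat fm
  | CntEq nat nat fm
  | Star fm fm

definition Iff :: "fm \<Rightarrow> fm \<Rightarrow> fm" where
  "Iff p q = Conj (Disj (Neg p) q) (Disj (Neg q) p)"

fun sem :: "nat set \<Rightarrow> (nat \<Rightarrow> nat set) \<Rightarrow> (nat \<Rightarrow> (nat \<times> nat) set) \<Rightarrow> (nat \<Rightarrow> nat) \<Rightarrow> fm \<Rightarrow> bool" where
  "sem D U B v Top = True"
| "sem D U B v (UPred a x) = (v x \<in> U a)"
| "sem D U B v (Bin f x y) = ((v x, v y) \<in> B f)"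
| "sem D U B v (Eq x y) = (v x = v y)"
| "sem D U B v (Neg p) = (\<not> sem D U B v p)"
| "sem D U B v (Conj p q) = (sem D U B v p \<and> sem D U B v q)"
| "sem D U B v (Disj p q) = (sem D U B v p \<or> sem D U B v q)"
| "sem D U B v (Ex x p) = (\<exists>d\<in>D. sem D U B (v(x := d)) p)"
| "sem D U B v (All x p) = (\<forall>d\<in>D. sem D U B (v(x := d)) p)"
| "sem D U B v (CntGe k x p) = (card {d\<in>D. sem D U B (v(x := d)) p} \<ge> k)"
| "sem D U B v (CntEq k x p) = (card {d\<in>D. sem D U B (v(x := d)) p} = k)"
| "sem D U B v (Star p q) =
     (\<exists>U1 U2 B1 B2.
        (\<forall>a. U a = U1 a \<union> U2 a \<and> U1 a \<inter> U2 a = {}) \<and>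
        (\<forall>f. B f = B1 f \<union> B2 f \<and> B1 f \<inter> B2 f = {}) \<and>
        sem D U1 B1 v p \<and> sem D U2 B2 v q)"

definition env_ok :: "nat set \<Rightarrow> (nat \<Rightarrow> nat set) \<Rightarrow> (nat \<Rightarrow> (nat \<times> nat) set) \<Rightarrow> (nat \<Rightarrow> nat) \<Rightarrow> bool" where
  "env_ok D U B v \<longleftrightarrow> finite D \<and> D \<noteq> {} \<and> (\<forall>a. U a \<subseteq> D) \<and> (\<forall>f. B f \<subseteq> D \<times> D) \<and> (\<forall>x. v x \<in> D)"

definition sat :: "fm \<Rightarrow> bool" where
  "sat F \<longleftrightarrow> (\<exists>D U B v. env_ok D U B v \<and> sem D U B v F)"

fun usyms :: "fm \<Rightarrow> nat set" where
  "usyms Top = {}"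
| "usyms (UPred a x) = {a}"
| "usyms (Bin f x y) = {}"
| "usyms (Eq x y) = {}"
| "usyms (Neg p) = usyms p"
| "usyms (Conj p q) = usyms p \<union> usyms q"
| "usyms (Disj p q) = usyms p \<union> usyms q"
| "usyms (Ex x p) = usyms p"
| "usyms (All x p) = usyms p"
| "usyms (CntGe k x p) = usyms p"
| "usyms (CntEq k x p) = usyms p"
| "usyms (Star p q) = usyms p \<union> usyms q"

fun bsyms :: "fm \<Rightarrow> nat set" where
  "bsyms Top = {}"
| "bsyms (UPred a x) = {}"
| "bsyms (Bin f x y) = {f}"
| "bsyms (Eq x y) = {}"
| "bsyms (Neg p) = bsyms p"
| "bsyms (Conj p q) = bsyms p \<union> bsyms q"
| "bsyms (Disj p q) = bsyms p \<union> bsyms q"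
| "bsyms (Ex x p) = bsyms p"
| "bsyms (All x p) = bsyms p"
| "bsyms (CntGe k x p) = bsyms p"
| "bsyms (CntEq k x p) = bsyms p"
| "bsyms (Star p q) = bsyms p \<union> bsyms q"

fun vars :: "fm \<Rightarrow> nat set" where
  "vars Top = {}"
| "vars (UPred a x) = {x}"
| "vars (Bin f x y) = {x, y}"
| "vars (Eq x y) = {x, y}"
| "vars (Neg p) = vars p"
| "vars (Conj p q) = vars p \<union> vars q"
| "vars (Disj p q) = vars p \<union> vars q"
| "vars (Ex x p) = insert x (vars p)"
| "vars (All x p) = insert x (vars p)"
| "vars (CntGe k x p) = insert x (vars p)"
| "vars (CntEq k x p) = insert x (vars p)"
| "vars (Star p q) = vars p \<union> vars q"

fun star_free :: "fm \<Rightarrow> bool" where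
  "star_free (Neg p) = star_free p"
| "star_free (Conj p q) = (star_free p \<and> star_free q)"
| "star_free (Disj p q) = (star_free p \<and> star_free q)"
| "star_free (Ex x p) = star_free p"
| "star_free (All x p) = star_free p"
| "star_free (CntGe k x p) = star_free p"
| "star_free (CntEq k x p) = star_free p"
| "star_free (Star p q) = False"
| "star_free _ = True"

text \<open>C^2: first-order formulas with counting quantifiers (no spatial conjunction)
using only the two variable names x = 0 and y = 1.\<close>
definition C2 :: "fm \<Rightarrow> bool" where
  "C2 F \<longleftrightarrow> star_free F \<and> vars F \<subseteq> {0, 1}"

fun rename :: "(nat \<Rightarrow> nat) \<Rightarrow> (nat \<Rightarrow> nat) \<Rightarrow> fm \<Rightarrow> fm" where
  "rename \<sigma> \<tau> Top = Top"
| "rename \<sigma> \<tau> (UPred a x) = UPred (\<sigma> a) x"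
| "rename \<sigma> \<tau> (Bin f x y) = Bin (\<tau> f) x y"
| "rename \<sigma> \<tau> (Eq x y) = Eq x y"
| "rename \<sigma> \<tau> (Neg p) = Neg (rename \<sigma> \<tau> p)"
| "rename \<sigma> \<tau> (Conj p q) = Conj (rename \<sigma> \<tau> p) (rename \<sigma> \<tau> q)"
| "rename \<sigma> \<tau> (Disj p q) = Disj (rename \<sigma> \<tau> p) (rename \<sigma> \<tau> q)"
| "rename \<sigma> \<tau> (Ex x p) = Ex x (rename \<sigma> \<tau> p)"
| "rename \<sigma> \<tau> (All x p) = All x (rename \<sigma> \<tau> p)"
| "rename \<sigma> \<tau> (CntGe k x p) = CntGe k x (rename \<sigma> \<tau> p)"
| "rename \<sigma> \<tau> (CntEq k x p) = CntEq k x (rename \<sigma> \<tau> p)"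
| "rename \<sigma> \<tau> (Star p q) = Star (rename \<sigma> \<tau> p) (rename \<sigma> \<tau> q)"

definition repl :: "nat list \<Rightarrow> nat list \<Rightarrow> nat \<Rightarrow> nat" where
  "repl xs ys a = (case map_of (zip xs ys) a of Some b \<Rightarrow> b | None \<Rightarrow> a)"

definition bigconj :: "fm list \<Rightarrow> fm" where
  "bigconj Fs = foldr Conj Fs Top"

definition part_u :: "nat \<Rightarrow> nat \<Rightarrow> nat \<Rightarrow> fm" where
  "part_u A A1 A2 = All 0 (Conj (Iff (UPred A 0) (Disj (UPred A1 0) (UPred A2 0)))
                                (Neg (Conj (UPred A1 0) (UPred A2 0))))"

definition part_b :: "nat \<Rightarrow> nat \<Rightarrow> nat \<Rightarrow> fm" where
  "part_b f f1 f2 = All 0 (All 1 (Conj (Iff (Bin f 0 1) (Disj (Bin f1 0 1) (Bin f2 0 1)))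
                                       (Neg (Conj (Bin f1 0 1) (Bin f2 0 1)))))"

definition sep_fm :: "nat list \<Rightarrow> nat list \<Rightarrow> nat list \<Rightarrow> nat list \<Rightarrow> nat list \<Rightarrow> nat list \<Rightarrow> fm \<Rightarrow> fm \<Rightarrow> fm" where
  "sep_fm As As1 As2 fs fs1 fs2 F1 F2 =
     Conj (bigconj (map (\<lambda>i. part_u (As ! i) (As1 ! i) (As2 ! i)) [0..<length As]))
      (Conj (bigconj (map (\<lambda>i. part_b (fs ! i) (fs1 ! i) (fs2 ! i)) [0..<length fs]))
        (Conj (rename (repl As As1) (repl fs fs1) F1)
              (rename (repl As As2) (repl fs fs2) F2)))"

inductive inI :: "fm \<Rightarrow> bool" where
  base: "C2 F \<Longrightarrow> inI F"
| star: "inI F1 \<Longrightarrow> inI F2 \<Longrightarrow> inI (Star F1 F2)"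
| disj: "inI F1 \<Longrightarrow> inI F2 \<Longrightarrow> inI (Disj F1 F2)"

text \<open>trans k F: fresh symbols are allocated from the counter k upwards; returns the
translated formula and the next unused counter value.\<close>
fun trans :: "nat \<Rightarrow> fm \<Rightarrow> fm \<times> nat" where
  "trans k (Star p q) =
     (let (g1, k1) = trans k p; (g2, k2) = trans k1 q;
          Lu = sorted_list_of_set (usyms p \<union> usyms q);
          Lb = sorted_list_of_set (bsyms p \<union> bsyms q);
          n = length Lu; m = length Lb
      in (sep_fm Lu [k2..<k2+n] [k2+n..<k2+2*n] Lb [k2..<k2+m] [k2+m..<k2+2*m] g1 g2,
          k2 + 2*n + 2*m))"
| "trans k (Disj p q) =
     (if C2 (Disj p q) then (Disj p q, k)
      else (let (g1, k1) = trans k p; (g2, k2) = trans k1 q in (Disj g1 g2, k2)))"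
| "trans k F = (F, k)"

definition translate :: "fm \<Rightarrow> fm" where
  "translate F = fst (trans (Suc (max (Max (insert 0 (usyms F))) (Max (insert 0 (bsyms F))))) F)"

end

theory Submission
  imports Defs
begin

lemma sem_agree:
  "star_free F \<Longrightarrow> (\<forall>a\<in>usyms F. U a = U' a) \<Longrightarrow> (\<forall>f\<in>bsyms F. B f = B' f)
   \<Longrightarrow> sem D U B v F = sem D U' B' v F"
  by (induction F arbitrary: v) auto

lemma sem_rename:
  "star_free F \<Longrightarrow> sem D U B v (rename \<sigma> \<tau> F) = sem D (U \<circ> \<sigma>) (B \<circ> \<tau>) v F"
  by (induction F arbitrary: v) auto

lemma rename_props:
  "star_free (rename \<sigma> \<tau> F) = star_free F" "vars (rename \<sigma> \<tau> F) = vars F"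
  "usyms (rename \<sigma> \<tau> F) = \<sigma> ` usyms F" "bsyms (rename \<sigma> \<tau> F) = \<tau> ` bsyms F"
  by (induction F) auto

lemma sem_bigconj: "sem D U B v (bigconj Fs) = (\<forall>F\<in>set Fs. sem D U B v F)"
  by (induction Fs) (auto simp: bigconj_def)

lemma bigconj_props:
  "star_free (bigconj Fs) = (\<forall>F\<in>set Fs. star_free F)"
  "vars (bigconj Fs) = (\<Union>F\<in>set Fs. vars F)"
  "usyms (bigconj Fs) = (\<Union>F\<in>set Fs. usyms F)"
  "bsyms (bigconj Fs) = (\<Union>F\<in>set Fs. bsyms F)"
  by (induction Fs) (auto simp: bigconj_def)

lemma sem_Iff[simp]: "sem D U B v (Iff p q) = (sem D U B v p = sem D U B v q)"
  by (auto simp: Iff_def)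

lemma Iff_props[simp]: "star_free (Iff p q) = (star_free p \<and> star_free q)"
  "vars (Iff p q) = vars p \<union> vars q" "usyms (Iff p q) = usyms p \<union> usyms q"
  "bsyms (Iff p q) = bsyms p \<union> bsyms q"
  by (auto simp: Iff_def)

lemma sem_part_u: "sem D U B v (part_u A A1 A2) =
  (\<forall>d\<in>D. (d \<in> U A \<longleftrightarrow> d \<in> U A1 \<or> d \<in> U A2) \<and> \<not> (d \<in> U A1 \<and> d \<in> U A2))"
  by (auto simp: part_u_def)

lemma sem_part_b: "sem D U B v (part_b f f1 f2) =
  (\<forall>d\<in>D. \<forall>e\<in>D. ((d,e) \<in> B f \<longleftrightarrow> (d,e) \<in> B f1 \<or> (d,e) \<in> B f2) \<and> \<not> ((d,e) \<in> B f1 \<and> (d,e) \<in> B f2))"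
  by (auto simp: part_b_def)

lemma part_props[simp]:
  "star_free (part_u A A1 A2)" "vars (part_u A A1 A2) = {0}" "usyms (part_u A A1 A2) = {A,A1,A2}"
  "bsyms (part_u A A1 A2) = {}"
  "star_free (part_b f f1 f2)" "vars (part_b f f1 f2) = {0,1}" "usyms (part_b f f1 f2) = {}"
  "bsyms (part_b f f1 f2) = {f,f1,f2}"
  by (auto simp: part_u_def part_b_def)

lemma repl_nth: "distinct xs \<Longrightarrow> length ys = length xs \<Longrightarrow> i < length xs \<Longrightarrow> repl xs ys (xs ! i) = ys ! i"
  unfolding repl_def by (simp add: map_of_zip_nth)

lemma repl_notin: assumes "a \<notin> set xs" "length ys = length xs" shows "repl xs ys a = a"
proof -
  have "map_of (zip xs ys) a = None" using assms by (auto simp add: map_of_eq_None_iff dest: set_zip_leftD)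
  then show ?thesis unfolding repl_def by simp
qed

lemma repl_image: "length ys = length xs \<Longrightarrow> repl xs ys ` S \<subseteq> S \<union> set ys"
proof
  fix b assume "b \<in> repl xs ys ` S"
  then obtain a where a: "a \<in> S" "b = repl xs ys a" by auto
  show "b \<in> S \<union> set ys"
  proof (cases "map_of (zip xs ys) a")
    case None then show ?thesis using a by (simp add: repl_def)
  next
    case (Some c) then have "(a, c) \<in> set (zip xs ys)" by (rule map_of_SomeD)
    then have "c \<in> set ys" by (rule set_zip_rightD)
    then show ?thesis using a Some by (simp add: repl_def)
  qed
qed


definition pu :: "nat set \<Rightarrow> (nat \<Rightarrow> nat set) \<Rightarrow> nat \<Rightarrow> nat \<Rightarrow> nat \<Rightarrow> bool" where
  "pu D U A A1 A2 \<longleftrightarrow> (\<forall>d\<in>D. (d \<in> U A \<longleftrightarrow> d \<in> U A1 \<or> d \<in> U A2) \<and> \<not> (d \<in> U A1 \<and> d \<in> U A2))"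
definition pb :: "nat set \<Rightarrow> (nat \<Rightarrow> (nat\<times>nat) set) \<Rightarrow> nat \<Rightarrow> nat \<Rightarrow> nat \<Rightarrow> bool" where
  "pb D B f f1 f2 \<longleftrightarrow> (\<forall>d\<in>D. \<forall>e\<in>D. ((d,e) \<in> B f \<longleftrightarrow> (d,e) \<in> B f1 \<or> (d,e) \<in> B f2) \<and> \<not> ((d,e) \<in> B f1 \<and> (d,e) \<in> B f2))"

lemma sem_sep:
  assumes "star_free G1" "star_free G2"
  shows "sem D U B v (sep_fm As As1 As2 fs fs1 fs2 G1 G2) =
   ((\<forall>i<length As. pu D U (As!i) (As1!i) (As2!i)) \<and> (\<forall>i<length fs. pb D B (fs!i) (fs1!i) (fs2!i)) \<and>
    sem D (U \<circ> repl As As1) (B \<circ> repl fs fs1) v G1 \<and> sem D (U \<circ> repl As As2) (B \<circ> repl fs fs2) v G2)"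
  using assms by (auto simp: sep_fm_def sem_bigconj sem_rename sem_part_u sem_part_b pu_def pb_def)

lemma sep_props:
  assumes "star_free G1" "star_free G2" "length As1 = length As" "length As2 = length As"
     "length fs1 = length fs" "length fs2 = length fs"
  shows "star_free (sep_fm As As1 As2 fs fs1 fs2 G1 G2)"
    "vars (sep_fm As As1 As2 fs fs1 fs2 G1 G2) \<subseteq> {0,1} \<union> vars G1 \<union> vars G2"
    "usyms (sep_fm As As1 As2 fs fs1 fs2 G1 G2) \<subseteq> set As \<union> set As1 \<union> set As2 \<union> usyms G1 \<union> usyms G2"
    "bsyms (sep_fm As As1 As2 fs fs1 fs2 G1 G2) \<subseteq> set fs \<union> set fs1 \<union> set fs2 \<union> bsyms G1 \<union> bsyms G2"
  using assms repl_image[of As1 As "usyms G1"] repl_image[of As2 As "usyms G2"]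
    repl_image[of fs1 fs "bsyms G1"] repl_image[of fs2 fs "bsyms G2"]
  by (auto simp: sep_fm_def bigconj_props rename_props dest: nth_mem)

definition agr :: "('a \<Rightarrow> 'b) \<Rightarrow> ('a \<Rightarrow> 'b) \<Rightarrow> 'a set \<Rightarrow> bool" where
  "agr f g S \<longleftrightarrow> (\<forall>a. a \<notin> S \<longrightarrow> f a = g a)"


lemma env_okD: "env_ok D U B v \<Longrightarrow> U a \<subseteq> D" "env_ok D U B v \<Longrightarrow> B f \<subseteq> D \<times> D"
  by (auto simp: env_ok_def)

lemma star_step:
  fixes P1 P2 :: "(nat \<Rightarrow> nat set) \<Rightarrow> (nat \<Rightarrow> (nat\<times>nat) set) \<Rightarrow> bool"
  assumes dA: "distinct (As @ As1 @ As2)" and dF: "distinct (fs @ fs1 @ fs2)"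
  and lA1: "length As1 = length As" and lA2: "length As2 = length As"
  and lf1: "length fs1 = length fs" and lf2: "length fs2 = length fs"
  and sf1: "star_free g1" and sf2: "star_free g2"
  and X12: "X1 \<inter> X2 = {}"
  and X1d: "X1 \<inter> (set As \<union> set As1 \<union> set As2 \<union> set fs \<union> set fs1 \<union> set fs2) = {}"
  and X2d: "X2 \<inter> (set As \<union> set As1 \<union> set As2 \<union> set fs \<union> set fs1 \<union> set fs2) = {}"
  and s1: "usyms g1 \<subseteq> set As \<union> X1" "bsyms g1 \<subseteq> set fs \<union> X1"
  and s2: "usyms g2 \<subseteq> set As \<union> X2" "bsyms g2 \<subseteq> set fs \<union> X2"
  and R1: "\<And>U B. env_ok D U B v \<Longrightarrow> P1 U B = (\<exists>U' B'. agr U U' X1 \<and> agr B B' X1 \<and> env_ok D U' B' v \<and> sem D U' B' v g1)"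
  and R2: "\<And>U B. env_ok D U B v \<Longrightarrow> P2 U B = (\<exists>U' B'. agr U U' X2 \<and> agr B B' X2 \<and> env_ok D U' B' v \<and> sem D U' B' v g2)"
  and env: "env_ok D U B v"
  and Y: "X1 \<union> X2 \<union> set As1 \<union> set As2 \<subseteq> Y" "Y \<inter> set As = {}"
  and YB: "X1 \<union> X2 \<union> set fs1 \<union> set fs2 \<subseteq> YB" "YB \<inter> set fs = {}"
  shows "(\<exists>U1 U2 B1 B2. (\<forall>a. U a = U1 a \<union> U2 a \<and> U1 a \<inter> U2 a = {}) \<and>
            (\<forall>f. B f = B1 f \<union> B2 f \<and> B1 f \<inter> B2 f = {}) \<and> P1 U1 B1 \<and> P2 U2 B2)
     = (\<exists>U' B'. agr U U' Y \<and> agr B B' YB \<and> env_ok D U' B' v \<and> sem D U' B' v (sep_fm As As1 As2 fs fs1 fs2 g1 g2))"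
proof -
  have dAs: "distinct As" "distinct As1" "distinct As2" using dA by auto
  have dfs: "distinct fs" "distinct fs1" "distinct fs2" using dF by auto
  have AsD: "set As \<inter> set As1 = {}" "set As \<inter> set As2 = {}" "set As1 \<inter> set As2 = {}" using dA by auto
  have fsD: "set fs \<inter> set fs1 = {}" "set fs \<inter> set fs2 = {}" "set fs1 \<inter> set fs2 = {}" using dF by auto
  have rA1: "\<And>i. i < length As \<Longrightarrow> repl As As1 (As!i) = As1!i" using dAs lA1 by (simp add: repl_nth)
  have rA2: "\<And>i. i < length As \<Longrightarrow> repl As As2 (As!i) = As2!i" using dAs lA2 by (simp add: repl_nth)
  have rA1': "\<And>i. i < length As \<Longrightarrow> repl As1 As (As1!i) = As!i" using dAs lA1 by (metis repl_nth)
  have rA2': "\<And>i. i < length As \<Longrightarrow> repl As2 As (As2!i) = As!i" using dAs lA2 by (metis repl_nth)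
  have rf1: "\<And>i. i < length fs \<Longrightarrow> repl fs fs1 (fs!i) = fs1!i" using dfs lf1 by (simp add: repl_nth)
  have rf2: "\<And>i. i < length fs \<Longrightarrow> repl fs fs2 (fs!i) = fs2!i" using dfs lf2 by (simp add: repl_nth)
  have rf1': "\<And>i. i < length fs \<Longrightarrow> repl fs1 fs (fs1!i) = fs!i" using dfs lf1 by (metis repl_nth)
  have rf2': "\<And>i. i < length fs \<Longrightarrow> repl fs2 fs (fs2!i) = fs!i" using dfs lf2 by (metis repl_nth)
  have nA: "\<And>a. a \<notin> set As \<Longrightarrow> repl As As1 a = a" "\<And>a. a \<notin> set As \<Longrightarrow> repl As As2 a = a"
    using lA1 lA2 by (auto simp: repl_notin)
  have nf: "\<And>a. a \<notin> set fs \<Longrightarrow> repl fs fs1 a = a" "\<And>a. a \<notin> set fs \<Longrightarrow> repl fs fs2 a = a"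
    using lf1 lf2 by (auto simp: repl_notin)
  show ?thesis
  proof
    assume "\<exists>U1 U2 B1 B2. (\<forall>a. U a = U1 a \<union> U2 a \<and> U1 a \<inter> U2 a = {}) \<and>
            (\<forall>f. B f = B1 f \<union> B2 f \<and> B1 f \<inter> B2 f = {}) \<and> P1 U1 B1 \<and> P2 U2 B2"
    then obtain U1 U2 B1 B2 where sU: "\<And>a. U a = U1 a \<union> U2 a \<and> U1 a \<inter> U2 a = {}"
      and sB: "\<And>f. B f = B1 f \<union> B2 f \<and> B1 f \<inter> B2 f = {}" and p1: "P1 U1 B1" and p2: "P2 U2 B2"
      by blast
    have e1: "env_ok D U1 B1 v" using env sU sB unfolding env_ok_def by blast
    have e2: "env_ok D U2 B2 v" using env sU sB unfolding env_ok_def by blast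
    obtain U1' B1' where a1: "agr U1 U1' X1" "agr B1 B1' X1" and e1': "env_ok D U1' B1' v"
      and g1: "sem D U1' B1' v g1" using R1[OF e1] p1 by blast
    obtain U2' B2' where a2: "agr U2 U2' X2" "agr B2 B2' X2" and e2': "env_ok D U2' B2' v"
      and g2: "sem D U2' B2' v g2" using R2[OF e2] p2 by blast
    define Us where "Us a = (if a \<in> X1 then U1' a else if a \<in> X2 then U2' a
       else if a \<in> set As1 then U1 (repl As1 As a) else if a \<in> set As2 then U2 (repl As2 As a) else U a)" for a
    define Bs where "Bs f = (if f \<in> X1 then B1' f else if f \<in> X2 then B2' f
       else if f \<in> set fs1 then B1 (repl fs1 fs f) else if f \<in> set fs2 then B2 (repl fs2 fs f) else B f)" for f
    have agU: "agr U Us Y" using Y unfolding agr_def Us_def by auto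
    have agB: "agr B Bs YB" using YB unfolding agr_def Bs_def by auto
    have eS: "env_ok D Us Bs v"
    proof -
      have "\<forall>a. Us a \<subseteq> D"
      proof
        fix a
        have "U1' a \<subseteq> D" "U2' a \<subseteq> D" "U1 (repl As1 As a) \<subseteq> D" "U2 (repl As2 As a) \<subseteq> D" "U a \<subseteq> D"
          using env_okD e1 e2 e1' e2' env by blast+
        then show "Us a \<subseteq> D" unfolding Us_def by simp
      qed
      moreover have "\<forall>a. Bs a \<subseteq> D \<times> D"
      proof
        fix a
        have "B1' a \<subseteq> D \<times> D" "B2' a \<subseteq> D \<times> D" "B1 (repl fs1 fs a) \<subseteq> D \<times> D" "B2 (repl fs2 fs a) \<subseteq> D \<times> D" "B a \<subseteq> D \<times> D"
          using env_okD e1 e2 e1' e2' env by blast+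
        then show "Bs a \<subseteq> D \<times> D" unfolding Bs_def by simp
      qed
      ultimately show ?thesis using env unfolding env_ok_def by blast
    qed
    have UsA: "\<And>i. i < length As \<Longrightarrow> Us (As!i) = U (As!i) \<and> Us (As1!i) = U1 (As!i) \<and> Us (As2!i) = U2 (As!i)"
    proof -
      fix i assume i: "i < length As"
      have m: "As!i \<in> set As" "As1!i \<in> set As1" "As2!i \<in> set As2" using i lA1 lA2 by auto
      have n: "As!i \<notin> X1" "As!i \<notin> X2" "As!i \<notin> set As1" "As!i \<notin> set As2"
        "As1!i \<notin> X1" "As1!i \<notin> X2" "As2!i \<notin> X1" "As2!i \<notin> X2" "As2!i \<notin> set As1"
        using m X1d X2d AsD by blast+
      show "Us (As!i) = U (As!i) \<and> Us (As1!i) = U1 (As!i) \<and> Us (As2!i) = U2 (As!i)"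
        using n m rA1'[OF i] rA2'[OF i] unfolding Us_def by simp
    qed
    have BsA: "\<And>i. i < length fs \<Longrightarrow> Bs (fs!i) = B (fs!i) \<and> Bs (fs1!i) = B1 (fs!i) \<and> Bs (fs2!i) = B2 (fs!i)"
    proof -
      fix i assume i: "i < length fs"
      have m: "fs!i \<in> set fs" "fs1!i \<in> set fs1" "fs2!i \<in> set fs2" using i lf1 lf2 by auto
      have n: "fs!i \<notin> X1" "fs!i \<notin> X2" "fs!i \<notin> set fs1" "fs!i \<notin> set fs2"
        "fs1!i \<notin> X1" "fs1!i \<notin> X2" "fs2!i \<notin> X1" "fs2!i \<notin> X2" "fs2!i \<notin> set fs1"
        using m X1d X2d fsD by blast+
      show "Bs (fs!i) = B (fs!i) \<and> Bs (fs1!i) = B1 (fs!i) \<and> Bs (fs2!i) = B2 (fs!i)"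
        using n m rf1'[OF i] rf2'[OF i] unfolding Bs_def by simp
    qed
    have P_u: "\<forall>i<length As. pu D Us (As!i) (As1!i) (As2!i)"
    proof (intro allI impI)
      fix i assume i: "i < length As"
      have "U (As!i) = U1 (As!i) \<union> U2 (As!i)" "U1 (As!i) \<inter> U2 (As!i) = {}" using sU by blast+
      then show "pu D Us (As!i) (As1!i) (As2!i)" using UsA[OF i] unfolding pu_def by blast
    qed
    have P_b: "\<forall>i<length fs. pb D Bs (fs!i) (fs1!i) (fs2!i)"
    proof (intro allI impI)
      fix i assume i: "i < length fs"
      have "B (fs!i) = B1 (fs!i) \<union> B2 (fs!i)" "B1 (fs!i) \<inter> B2 (fs!i) = {}" using sB by blast+
      then show "pb D Bs (fs!i) (fs1!i) (fs2!i)" using BsA[OF i] unfolding pb_def by blast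
    qed
    have G1: "sem D (Us \<circ> repl As As1) (Bs \<circ> repl fs fs1) v g1"
    proof -
      have "sem D (Us \<circ> repl As As1) (Bs \<circ> repl fs fs1) v g1 = sem D U1' B1' v g1"
      proof (rule sem_agree[OF sf1])
        show "\<forall>a\<in>usyms g1. (Us \<circ> repl As As1) a = U1' a"
        proof
          fix a assume "a \<in> usyms g1"
          then consider "a \<in> set As" | "a \<in> X1" "a \<notin> set As" using s1 by blast
          then show "(Us \<circ> repl As As1) a = U1' a"
          proof cases
            case 1
            have nx: "a \<notin> X1" using 1 X1d by blast
            obtain i where i: "i < length As" "a = As!i" using 1 by (auto simp: in_set_conv_nth)
            then show ?thesis using UsA[OF i(1)] rA1[OF i(1)] a1 nx unfolding agr_def by simp
          next
            case 2 then show ?thesis using nA unfolding Us_def by auto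
          qed
        qed
        show "\<forall>a\<in>bsyms g1. (Bs \<circ> repl fs fs1) a = B1' a"
        proof
          fix a assume "a \<in> bsyms g1"
          then consider "a \<in> set fs" | "a \<in> X1" "a \<notin> set fs" using s1 by blast
          then show "(Bs \<circ> repl fs fs1) a = B1' a"
          proof cases
            case 1
            have nx: "a \<notin> X1" using 1 X1d by blast
            obtain i where i: "i < length fs" "a = fs!i" using 1 by (auto simp: in_set_conv_nth)
            then show ?thesis using BsA[OF i(1)] rf1[OF i(1)] a1 nx unfolding agr_def by simp
          next
            case 2 then show ?thesis using nf unfolding Bs_def by auto
          qed
        qed
      qed
      then show ?thesis using g1 by simp
    qed
    have G2: "sem D (Us \<circ> repl As As2) (Bs \<circ> repl fs fs2) v g2"
    proof -
      have "sem D (Us \<circ> repl As As2) (Bs \<circ> repl fs fs2) v g2 = sem D U2' B2' v g2"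
      proof (rule sem_agree[OF sf2])
        show "\<forall>a\<in>usyms g2. (Us \<circ> repl As As2) a = U2' a"
        proof
          fix a assume "a \<in> usyms g2"
          then consider "a \<in> set As" | "a \<in> X2" "a \<notin> set As" using s2 by blast
          then show "(Us \<circ> repl As As2) a = U2' a"
          proof cases
            case 1
            have nx: "a \<notin> X2" using 1 X2d by blast
            obtain i where i: "i < length As" "a = As!i" using 1 by (auto simp: in_set_conv_nth)
            then show ?thesis using UsA[OF i(1)] rA2[OF i(1)] a2 nx unfolding agr_def by simp
          next
            case 2 then show ?thesis using nA X12 unfolding Us_def by auto
          qed
        qed
        show "\<forall>a\<in>bsyms g2. (Bs \<circ> repl fs fs2) a = B2' a"
        proof
          fix a assume "a \<in> bsyms g2"
          then consider "a \<in> set fs" | "a \<in> X2" "a \<notin> set fs" using s2 by blast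
          then show "(Bs \<circ> repl fs fs2) a = B2' a"
          proof cases
            case 1
            have nx: "a \<notin> X2" using 1 X2d by blast
            obtain i where i: "i < length fs" "a = fs!i" using 1 by (auto simp: in_set_conv_nth)
            then show ?thesis using BsA[OF i(1)] rf2[OF i(1)] a2 nx unfolding agr_def by simp
          next
            case 2 then show ?thesis using nf X12 unfolding Bs_def by auto
          qed
        qed
      qed
      then show ?thesis using g2 by simp
    qed
    show "\<exists>U' B'. agr U U' Y \<and> agr B B' YB \<and> env_ok D U' B' v \<and> sem D U' B' v (sep_fm As As1 As2 fs fs1 fs2 g1 g2)"
      using agU agB eS P_u P_b G1 G2 sf1 sf2 by (auto simp: sem_sep)
  next
    assume "\<exists>U' B'. agr U U' Y \<and> agr B B' YB \<and> env_ok D U' B' v \<and> sem D U' B' v (sep_fm As As1 As2 fs fs1 fs2 g1 g2)"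
    then obtain U' B' where aU: "agr U U' Y" and aB: "agr B B' YB" and e': "env_ok D U' B' v"
      and ss: "sem D U' B' v (sep_fm As As1 As2 fs fs1 fs2 g1 g2)" by blast
    have P_u: "\<forall>i<length As. pu D U' (As!i) (As1!i) (As2!i)"
      and P_b: "\<forall>i<length fs. pb D B' (fs!i) (fs1!i) (fs2!i)"
      and G1: "sem D (U' \<circ> repl As As1) (B' \<circ> repl fs fs1) v g1"
      and G2: "sem D (U' \<circ> repl As As2) (B' \<circ> repl fs fs2) v g2"
      using ss sf1 sf2 by (auto simp: sem_sep)
    define U1 where "U1 a = (if a \<in> set As then U' (repl As As1 a) else U a)" for a
    define U2 where "U2 a = (if a \<in> set As then U' (repl As As2 a) else {})" for a
    define B1 where "B1 a = (if a \<in> set fs then B' (repl fs fs1 a) else B a)" for a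
    define B2 where "B2 a = (if a \<in> set fs then B' (repl fs fs2 a) else {})" for a
    have sU: "\<forall>a. U a = U1 a \<union> U2 a \<and> U1 a \<inter> U2 a = {}"
    proof
      fix a show "U a = U1 a \<union> U2 a \<and> U1 a \<inter> U2 a = {}"
      proof (cases "a \<in> set As")
        case True
        then obtain i where i: "i < length As" "a = As!i" by (auto simp: in_set_conv_nth)
        have "a \<notin> Y" using True Y by auto
        then have "U a = U' a" using aU unfolding agr_def by auto
        moreover have "U' a \<subseteq> D" "U' (As1!i) \<subseteq> D" "U' (As2!i) \<subseteq> D" using e' env_okD by auto
        ultimately show ?thesis using P_u i True rA1 rA2 unfolding U1_def U2_def pu_def by auto
      qed (simp add: U1_def U2_def)
    qed
    have sB: "\<forall>a. B a = B1 a \<union> B2 a \<and> B1 a \<inter> B2 a = {}"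
    proof
      fix a show "B a = B1 a \<union> B2 a \<and> B1 a \<inter> B2 a = {}"
      proof (cases "a \<in> set fs")
        case True
        then obtain i where i: "i < length fs" "a = fs!i" by (auto simp: in_set_conv_nth)
        have "a \<notin> YB" using True YB by auto
        then have "B a = B' a" using aB unfolding agr_def by auto
        moreover have "B' a \<subseteq> D \<times> D" "B' (fs1!i) \<subseteq> D \<times> D" "B' (fs2!i) \<subseteq> D \<times> D" using e' env_okD by auto
        ultimately show ?thesis using P_b i True rf1 rf2 unfolding B1_def B2_def pb_def by auto
      qed (simp add: B1_def B2_def)
    qed
    have e1: "env_ok D U1 B1 v" using env sU sB unfolding env_ok_def by blast
    have e2: "env_ok D U2 B2 v" using env sU sB unfolding env_ok_def by blast
    define U1' where "U1' a = (if a \<in> X1 then U' a else U1 a)" for a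
    define B1' where "B1' a = (if a \<in> X1 then B' a else B1 a)" for a
    define U2' where "U2' a = (if a \<in> X2 then U' a else U2 a)" for a
    define B2' where "B2' a = (if a \<in> X2 then B' a else B2 a)" for a
    have "P1 U1 B1"
    proof -
      have "agr U1 U1' X1" "agr B1 B1' X1" unfolding agr_def U1'_def B1'_def by auto
      moreover have "env_ok D U1' B1' v" using e1 e' unfolding env_ok_def U1'_def B1'_def by auto
      moreover have "sem D U1' B1' v g1"
      proof -
        have "sem D U1' B1' v g1 = sem D (U' \<circ> repl As As1) (B' \<circ> repl fs fs1) v g1"
          apply (rule sem_agree[OF sf1])
          using s1 X1d nA nf unfolding U1'_def U1_def B1'_def B1_def by auto
        then show ?thesis using G1 by simp
      qed
      ultimately show ?thesis using R1[OF e1] by blast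
    qed
    moreover have "P2 U2 B2"
    proof -
      have "agr U2 U2' X2" "agr B2 B2' X2" unfolding agr_def U2'_def B2'_def by auto
      moreover have "env_ok D U2' B2' v" using e2 e' unfolding env_ok_def U2'_def B2'_def by auto
      moreover have "sem D U2' B2' v g2"
      proof -
        have "sem D U2' B2' v g2 = sem D (U' \<circ> repl As As2) (B' \<circ> repl fs fs2) v g2"
          apply (rule sem_agree[OF sf2])
          using s2 X2d nA nf unfolding U2'_def U2_def B2'_def B2_def by auto
        then show ?thesis using G2 by simp
      qed
      ultimately show ?thesis using R2[OF e2] by blast
    qed
    ultimately show "\<exists>U1 U2 B1 B2. (\<forall>a. U a = U1 a \<union> U2 a \<and> U1 a \<inter> U2 a = {}) \<and>
            (\<forall>f. B f = B1 f \<union> B2 f \<and> B1 f \<inter> B2 f = {}) \<and> P1 U1 B1 \<and> P2 U2 B2"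
      using sU sB by blast
  qed
qed


lemma agr_empty: "agr f g {} \<longleftrightarrow> f = g"
  by (auto simp: agr_def)

lemma part_a:
  assumes sf: "star_free F1" "star_free F2"
  and sy: "usyms F1 \<union> usyms F2 \<subseteq> set As" "bsyms F1 \<union> bsyms F2 \<subseteq> set fs"
  and l: "length As1 = length As" "length As2 = length As" "length fs1 = length fs" "length fs2 = length fs"
  and d: "distinct (As @ As1 @ As2)" "distinct (fs @ fs1 @ fs2)"
  shows "sat (Star F1 F2) \<longleftrightarrow> sat (sep_fm As As1 As2 fs fs1 fs2 F1 F2)"
proof -
  have key: "sem D U B v (Star F1 F2) = (\<exists>U' B'. agr U U' (set As1 \<union> set As2) \<and> agr B B' (set fs1 \<union> set fs2)
       \<and> env_ok D U' B' v \<and> sem D U' B' v (sep_fm As As1 As2 fs fs1 fs2 F1 F2))"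
    if env: "env_ok D U B v" for D U B v
    unfolding sem.simps
    apply (rule star_step[where ?X1.0="{}" and ?X2.0="{}" and ?g1.0=F1 and ?g2.0=F2])
    using assms env d by (auto simp: agr_empty)
  show ?thesis
  proof
    assume "sat (Star F1 F2)"
    then obtain D U B v where "env_ok D U B v" "sem D U B v (Star F1 F2)" unfolding sat_def by blast
    then show "sat (sep_fm As As1 As2 fs fs1 fs2 F1 F2)" using key unfolding sat_def by blast
  next
    assume "sat (sep_fm As As1 As2 fs fs1 fs2 F1 F2)"
    then obtain D U B v where e: "env_ok D U B v" "sem D U B v (sep_fm As As1 As2 fs fs1 fs2 F1 F2)" unfolding sat_def by blast
    have "agr U U (set As1 \<union> set As2)" "agr B B (set fs1 \<union> set fs2)" by (auto simp: agr_def)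
    then have "sem D U B v (Star F1 F2)" using key[OF e(1)] e by blast
    then show "sat (Star F1 F2)" using e unfolding sat_def by blast
  qed
qed


lemma trans_C2: "C2 F \<Longrightarrow> trans k F = (F, k)"
  by (cases F) (auto simp: C2_def)

lemma syms_finite: "finite (usyms F)" "finite (bsyms F)"
  by (induction F) auto

lemma agr_mono: "agr f g S \<Longrightarrow> S \<subseteq> T \<Longrightarrow> agr f g T"
  by (auto simp: agr_def)

lemma agree_patch:
  fixes k :: nat
  assumes "agr U U' {k..<k'}" "S \<subseteq> T \<union> X" "\<forall>a\<in>T. a < k"
  shows "\<forall>a\<in>S. (if a \<in> X then U' a else U a) = U' a"
proof
  fix a assume a: "a \<in> S"
  show "(if a \<in> X then U' a else U a) = U' a"
  proof (cases "a \<in> X")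
    case False
    then have "a \<in> T" using a assms(2) by blast
    then have "a < k" using assms(3) by blast
    then show ?thesis using False assms(1) unfolding agr_def by force
  qed simp
qed

lemma trans_inv:
  "inI F \<Longrightarrow> (\<forall>a\<in>usyms F. a < k) \<Longrightarrow> (\<forall>f\<in>bsyms F. f < k) \<Longrightarrow> trans k F = (g, k') \<Longrightarrow>
   k \<le> k' \<and> C2 g \<and> usyms g \<subseteq> usyms F \<union> {k..<k'} \<and> bsyms g \<subseteq> bsyms F \<union> {k..<k'} \<and>
   (\<forall>D U B v. env_ok D U B v \<longrightarrow> (sem D U B v F =
      (\<exists>U' B'. agr U U' {k..<k'} \<and> agr B B' {k..<k'} \<and> env_ok D U' B' v \<and> sem D U' B' v g)))"
proof (induction F arbitrary: k g k' rule: inI.induct)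
  case (base F)
  then have "g = F" "k' = k" using trans_C2 by auto
  then show ?case using base by (simp add: agr_empty)
next
  case (star F1 F2)
  obtain g1 k1 where t1: "trans k F1 = (g1, k1)" by fastforce
  obtain g2 k2 where t2: "trans k1 F2 = (g2, k2)" by fastforce
  define Lu where "Lu = sorted_list_of_set (usyms F1 \<union> usyms F2)"
  define Lb where "Lb = sorted_list_of_set (bsyms F1 \<union> bsyms F2)"
  define n where "n = length Lu"
  define m where "m = length Lb"
  have gk: "g = sep_fm Lu [k2..<k2+n] [k2+n..<k2+2*n] Lb [k2..<k2+m] [k2+m..<k2+2*m] g1 g2"
     "k' = k2 + 2*n + 2*m"
    using star.prems(3) t1 t2 unfolding Lu_def Lb_def n_def m_def by (auto simp: Let_def)
  have I1: "k \<le> k1 \<and> C2 g1 \<and> usyms g1 \<subseteq> usyms F1 \<union> {k..<k1} \<and> bsyms g1 \<subseteq> bsyms F1 \<union> {k..<k1} \<and>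
   (\<forall>D U B v. env_ok D U B v \<longrightarrow> (sem D U B v F1 =
      (\<exists>U' B'. agr U U' {k..<k1} \<and> agr B B' {k..<k1} \<and> env_ok D U' B' v \<and> sem D U' B' v g1)))"
    using star.IH(1)[OF _ _ t1] star.prems by auto
  have ik1: "k \<le> k1" and c1: "C2 g1" and u1: "usyms g1 \<subseteq> usyms F1 \<union> {k..<k1}" and b1: "bsyms g1 \<subseteq> bsyms F1 \<union> {k..<k1}"
    using I1 by blast+
  note r1 = I1[THEN conjunct2, THEN conjunct2, THEN conjunct2, THEN conjunct2]
  have p2a: "\<forall>a\<in>usyms F2. a < k1" using star.prems(1) ik1 by (metis UnCI order_less_le_trans usyms.simps(12))
  have p2b: "\<forall>f\<in>bsyms F2. f < k1" using star.prems(2) ik1 by (metis UnCI order_less_le_trans bsyms.simps(12))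
  have I2: "k1 \<le> k2 \<and> C2 g2 \<and> usyms g2 \<subseteq> usyms F2 \<union> {k1..<k2} \<and> bsyms g2 \<subseteq> bsyms F2 \<union> {k1..<k2} \<and>
   (\<forall>D U B v. env_ok D U B v \<longrightarrow> (sem D U B v F2 =
      (\<exists>U' B'. agr U U' {k1..<k2} \<and> agr B B' {k1..<k2} \<and> env_ok D U' B' v \<and> sem D U' B' v g2)))"
    by (rule star.IH(2)[OF p2a p2b t2])
  have ik2: "k1 \<le> k2" and c2: "C2 g2" and u2: "usyms g2 \<subseteq> usyms F2 \<union> {k1..<k2}" and b2: "bsyms g2 \<subseteq> bsyms F2 \<union> {k1..<k2}"
    using I2 by blast+
  note r2 = I2[THEN conjunct2, THEN conjunct2, THEN conjunct2, THEN conjunct2]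
  have sLu: "set Lu = usyms F1 \<union> usyms F2" "distinct Lu" unfolding Lu_def by (auto simp: syms_finite)
  have sLb: "set Lb = bsyms F1 \<union> bsyms F2" "distinct Lb" unfolding Lb_def by (auto simp: syms_finite)
  have Luk: "\<forall>a\<in>set Lu. a < k" "\<forall>a\<in>set Lb. a < k" using star.prems sLu sLb by auto
  have sf: "star_free g1" "star_free g2" using c1 c2 by (auto simp: C2_def)
  have dA: "distinct (Lu @ [k2..<k2+n] @ [k2+n..<k2+2*n])" using sLu(2) Luk ik1 ik2 by fastforce
  have dB: "distinct (Lb @ [k2..<k2+m] @ [k2+m..<k2+2*m])" using sLb(2) Luk ik1 ik2 by fastforce
  have sem_eq: "sem D U B v (Star F1 F2) = (\<exists>U' B'. agr U U' {k..<k'} \<and> agr B B' {k..<k'} \<and> env_ok D U' B' v \<and> sem D U' B' v g)"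
    if env: "env_ok D U B v" for D U B v
  proof -
    have kk: "k \<le> k1" "k1 \<le> k2" using ik1 ik2 by auto
    have ln: "length [k2..<k2+n] = length Lu" "length [k2+n..<k2+2*n] = length Lu"
      "length [k2..<k2+m] = length Lb" "length [k2+m..<k2+2*m] = length Lb" unfolding n_def m_def by auto
    have X12: "{k..<k1} \<inter> {k1..<k2} = {}" by auto
    have X1d: "{k..<k1} \<inter> (set Lu \<union> set [k2..<k2+n] \<union> set [k2+n..<k2+2*n] \<union> set Lb \<union> set [k2..<k2+m] \<union> set [k2+m..<k2+2*m]) = {}"
      using Luk kk by fastforce
    have X2d: "{k1..<k2} \<inter> (set Lu \<union> set [k2..<k2+n] \<union> set [k2+n..<k2+2*n] \<union> set Lb \<union> set [k2..<k2+m] \<union> set [k2+m..<k2+2*m]) = {}"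
      using Luk kk by fastforce
    have s1: "usyms g1 \<subseteq> set Lu \<union> {k..<k1}" "bsyms g1 \<subseteq> set Lb \<union> {k..<k1}"
      using u1 b1 sLu sLb by blast+
    have s2: "usyms g2 \<subseteq> set Lu \<union> {k1..<k2}" "bsyms g2 \<subseteq> set Lb \<union> {k1..<k2}"
      using u2 b2 sLu sLb by blast+
    have R1: "\<And>U B. env_ok D U B v \<Longrightarrow> sem D U B v F1 = (\<exists>U' B'. agr U U' {k..<k1} \<and> agr B B' {k..<k1} \<and> env_ok D U' B' v \<and> sem D U' B' v g1)"
      using r1 by blast
    have R2: "\<And>U B. env_ok D U B v \<Longrightarrow> sem D U B v F2 = (\<exists>U' B'. agr U U' {k1..<k2} \<and> agr B B' {k1..<k2} \<and> env_ok D U' B' v \<and> sem D U' B' v g2)"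
      using r2 by blast
    have Y: "{k..<k1} \<union> {k1..<k2} \<union> set [k2..<k2+n] \<union> set [k2+n..<k2+2*n] \<subseteq> {k..<k'}" "{k..<k'} \<inter> set Lu = {}"
      using kk Luk gk(2) by fastforce+
    have YB: "{k..<k1} \<union> {k1..<k2} \<union> set [k2..<k2+m] \<union> set [k2+m..<k2+2*m] \<subseteq> {k..<k'}" "{k..<k'} \<inter> set Lb = {}"
      using kk Luk gk(2) by fastforce+
    show ?thesis unfolding sem.simps gk(1)
      by (rule star_step[OF dA dB ln sf X12 X1d X2d s1 s2 R1 R2 env Y YB])
  qed
  have "C2 g"
    using sep_props[OF sf, of "[k2..<k2+n]" Lu "[k2+n..<k2+2*n]" "[k2..<k2+m]" Lb "[k2+m..<k2+2*m]"]
      c1 c2 unfolding gk(1) n_def m_def C2_def by auto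
  moreover have "usyms g \<subseteq> usyms (Star F1 F2) \<union> {k..<k'}"
  proof -
    have A: "set Lu \<union> set [k2..<k2+n] \<union> set [k2+n..<k2+2*n] \<union> usyms g1 \<union> usyms g2 \<subseteq> usyms (Star F1 F2) \<union> {k..<k'}"
      using u1 u2 ik1 ik2 sLu(1) gk(2) by auto
    have B: "usyms g \<subseteq> set Lu \<union> set [k2..<k2+n] \<union> set [k2+n..<k2+2*n] \<union> usyms g1 \<union> usyms g2"
      using sep_props(3)[OF sf, of "[k2..<k2+n]" Lu "[k2+n..<k2+2*n]" "[k2..<k2+m]" Lb "[k2+m..<k2+2*m]"]
      unfolding gk(1) n_def m_def by simp
    show ?thesis using A B by (rule order_trans[rotated])
  qed
  moreover have "bsyms g \<subseteq> bsyms (Star F1 F2) \<union> {k..<k'}"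
  proof -
    have A: "set Lb \<union> set [k2..<k2+m] \<union> set [k2+m..<k2+2*m] \<union> bsyms g1 \<union> bsyms g2 \<subseteq> bsyms (Star F1 F2) \<union> {k..<k'}"
      using b1 b2 ik1 ik2 sLb(1) gk(2) by auto
    have B: "bsyms g \<subseteq> set Lb \<union> set [k2..<k2+m] \<union> set [k2+m..<k2+2*m] \<union> bsyms g1 \<union> bsyms g2"
      using sep_props(4)[OF sf, of "[k2..<k2+n]" Lu "[k2+n..<k2+2*n]" "[k2..<k2+m]" Lb "[k2+m..<k2+2*m]"]
      unfolding gk(1) n_def m_def by simp
    show ?thesis using A B by (rule order_trans[rotated])
  qed
  moreover have "k \<le> k'" using ik1 ik2 gk by auto
  ultimately show ?case using sem_eq by blast
next
  case (disj F1 F2)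
  show ?case
  proof (cases "C2 (Disj F1 F2)")
    case True
    then have "g = Disj F1 F2" "k' = k" using disj.prems(3) by auto
    then show ?thesis using True by (simp add: agr_empty del: sem.simps)
  next
    case False
    obtain g1 k1 where t1: "trans k F1 = (g1, k1)" by fastforce
    obtain g2 k2 where t2: "trans k1 F2 = (g2, k2)" by fastforce
    have gk: "g = Disj g1 g2" "k' = k2" using disj.prems(3) t1 t2 False by auto
    have I1: "k \<le> k1 \<and> C2 g1 \<and> usyms g1 \<subseteq> usyms F1 \<union> {k..<k1} \<and> bsyms g1 \<subseteq> bsyms F1 \<union> {k..<k1} \<and>
     (\<forall>D U B v. env_ok D U B v \<longrightarrow> (sem D U B v F1 =
        (\<exists>U' B'. agr U U' {k..<k1} \<and> agr B B' {k..<k1} \<and> env_ok D U' B' v \<and> sem D U' B' v g1)))"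
      using disj.IH(1)[OF _ _ t1] disj.prems by auto
    have ik1: "k \<le> k1" and c1: "C2 g1" and u1: "usyms g1 \<subseteq> usyms F1 \<union> {k..<k1}" and b1: "bsyms g1 \<subseteq> bsyms F1 \<union> {k..<k1}"
      using I1 by blast+
    note r1 = I1[THEN conjunct2, THEN conjunct2, THEN conjunct2, THEN conjunct2]
    have p2a: "\<forall>a\<in>usyms F2. a < k1" using disj.prems(1) ik1 by (metis UnCI order_less_le_trans usyms.simps(7))
  have p2b: "\<forall>f\<in>bsyms F2. f < k1" using disj.prems(2) ik1 by (metis UnCI order_less_le_trans bsyms.simps(7))
    have I2: "k1 \<le> k2 \<and> C2 g2 \<and> usyms g2 \<subseteq> usyms F2 \<union> {k1..<k2} \<and> bsyms g2 \<subseteq> bsyms F2 \<union> {k1..<k2} \<and>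
     (\<forall>D U B v. env_ok D U B v \<longrightarrow> (sem D U B v F2 =
        (\<exists>U' B'. agr U U' {k1..<k2} \<and> agr B B' {k1..<k2} \<and> env_ok D U' B' v \<and> sem D U' B' v g2)))"
      by (rule disj.IH(2)[OF p2a p2b t2])
    have ik2: "k1 \<le> k2" and c2: "C2 g2" and u2: "usyms g2 \<subseteq> usyms F2 \<union> {k1..<k2}" and b2: "bsyms g2 \<subseteq> bsyms F2 \<union> {k1..<k2}"
      using I2 by blast+
    note r2 = I2[THEN conjunct2, THEN conjunct2, THEN conjunct2, THEN conjunct2]
    have sf: "star_free g1" "star_free g2" using c1 c2 by (auto simp: C2_def)
    have "C2 g" using c1 c2 gk by (auto simp: C2_def)
    moreover have "usyms g \<subseteq> usyms (Disj F1 F2) \<union> {k..<k'}" "bsyms g \<subseteq> bsyms (Disj F1 F2) \<union> {k..<k'}"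
      using u1 u2 b1 b2 ik1 ik2 gk by auto
    moreover have "k \<le> k'" using ik1 ik2 gk by auto
    moreover have "sem D U B v (Disj F1 F2) = (\<exists>U' B'. agr U U' {k..<k'} \<and> agr B B' {k..<k'} \<and> env_ok D U' B' v \<and> sem D U' B' v g)"
      if env: "env_ok D U B v" for D U B v
    proof
      assume "sem D U B v (Disj F1 F2)"
      then consider "sem D U B v F1" | "sem D U B v F2" by auto
      then show "\<exists>U' B'. agr U U' {k..<k'} \<and> agr B B' {k..<k'} \<and> env_ok D U' B' v \<and> sem D U' B' v g"
      proof cases
        case 1
        then obtain U' B' where "agr U U' {k..<k1}" "agr B B' {k..<k1}" "env_ok D U' B' v" "sem D U' B' v g1"
          using r1[rule_format, OF env] by blast
        moreover have "{k..<k1} \<subseteq> {k..<k'}" using ik2 gk by auto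
        ultimately show ?thesis using gk agr_mono by (metis sem.simps(7))
      next
        case 2
        then obtain U' B' where "agr U U' {k1..<k2}" "agr B B' {k1..<k2}" "env_ok D U' B' v" "sem D U' B' v g2"
          using r2[rule_format, OF env] by blast
        moreover have "{k1..<k2} \<subseteq> {k..<k'}" using ik1 gk by auto
        ultimately show ?thesis using gk agr_mono by (metis sem.simps(7))
      qed
    next
      assume "\<exists>U' B'. agr U U' {k..<k'} \<and> agr B B' {k..<k'} \<and> env_ok D U' B' v \<and> sem D U' B' v g"
      then obtain U' B' where a: "agr U U' {k..<k'}" "agr B B' {k..<k'}" and e': "env_ok D U' B' v"
        and sg: "sem D U' B' v g1 \<or> sem D U' B' v g2" using gk by auto
      then consider "sem D U' B' v g1" | "sem D U' B' v g2" by blast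
      then show "sem D U B v (Disj F1 F2)"
      proof cases
        case 1
        define U'' where "U'' a = (if a \<in> {k..<k1} then U' a else U a)" for a
        define B'' where "B'' a = (if a \<in> {k..<k1} then B' a else B a)" for a
        have "sem D U'' B'' v g1 = sem D U' B' v g1"
        proof (rule sem_agree[OF sf(1)])
          show "\<forall>a\<in>usyms g1. U'' a = U' a" unfolding U''_def
            by (rule agree_patch[OF a(1) u1]) (use disj.prems(1) in simp)
          show "\<forall>a\<in>bsyms g1. B'' a = B' a" unfolding B''_def
            by (rule agree_patch[OF a(2) b1]) (use disj.prems(2) in simp)
        qed
        moreover have "agr U U'' {k..<k1}" "agr B B'' {k..<k1}" unfolding agr_def U''_def B''_def by auto
        moreover have "env_ok D U'' B'' v" using env e' unfolding env_ok_def U''_def B''_def by auto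
        ultimately have "sem D U B v F1" using r1[rule_format, OF env] 1 by blast
        then show ?thesis by simp
      next
        case 2
        define U'' where "U'' a = (if a \<in> {k1..<k2} then U' a else U a)" for a
        define B'' where "B'' a = (if a \<in> {k1..<k2} then B' a else B a)" for a
        have "sem D U'' B'' v g2 = sem D U' B' v g2"
        proof (rule sem_agree[OF sf(2)])
          show "\<forall>a\<in>usyms g2. U'' a = U' a" unfolding U''_def
            by (rule agree_patch[OF a(1) u2]) (use disj.prems(1) in simp)
          show "\<forall>a\<in>bsyms g2. B'' a = B' a" unfolding B''_def
            by (rule agree_patch[OF a(2) b2]) (use disj.prems(2) in simp)
        qed
        moreover have "agr U U'' {k1..<k2}" "agr B B'' {k1..<k2}" unfolding agr_def U''_def B''_def by auto
        moreover have "env_ok D U'' B'' v" using env e' unfolding env_ok_def U''_def B''_def by auto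
        ultimately have "sem D U B v F2" using r2[rule_format, OF env] 2 by blast
        then show ?thesis by simp
      qed
    qed
    ultimately show ?thesis by blast
  qed
qed


theorem mainTheorem12:
  shows "(\<forall>F1 F2 As As1 As2 fs fs1 fs2.
            star_free F1 \<and> star_free F2 \<and>
            usyms F1 \<union> usyms F2 \<subseteq> set As \<and> bsyms F1 \<union> bsyms F2 \<subseteq> set fs \<and>
            length As1 = length As \<and> length As2 = length As \<and>
            length fs1 = length fs \<and> length fs2 = length fs \<and>
            distinct (As @ As1 @ As2) \<and> distinct (fs @ fs1 @ fs2) \<longrightarrow>
            (sat (Star F1 F2) \<longleftrightarrow> sat (sep_fm As As1 As2 fs fs1 fs2 F1 F2)))
       \<and> (\<forall>F. inI F \<longrightarrow> C2 (translate F) \<and> (sat (translate F) \<longleftrightarrow> sat F))"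
proof (intro conjI allI impI)
  fix F1 F2 As As1 As2 fs fs1 fs2
  assume h: "star_free F1 \<and> star_free F2 \<and>
            usyms F1 \<union> usyms F2 \<subseteq> set As \<and> bsyms F1 \<union> bsyms F2 \<subseteq> set fs \<and>
            length As1 = length As \<and> length As2 = length As \<and>
            length fs1 = length fs \<and> length fs2 = length fs \<and>
            distinct (As @ As1 @ As2) \<and> distinct (fs @ fs1 @ fs2)"
  show "sat (Star F1 F2) \<longleftrightarrow> sat (sep_fm As As1 As2 fs fs1 fs2 F1 F2)"
    using h by (intro part_a) auto
next
  fix F assume iF: "inI F"
  define k0 where "k0 = Suc (max (Max (insert 0 (usyms F))) (Max (insert 0 (bsyms F))))"
  obtain g k' where t: "trans k0 F = (g, k')" by fastforce
  have tr: "translate F = g" using t unfolding translate_def k0_def by simp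
  have pu: "\<forall>a\<in>usyms F. a < k0"
  proof
    fix a assume "a \<in> usyms F"
    then have "a \<le> Max (insert 0 (usyms F))" by (simp add: syms_finite)
    then show "a < k0" unfolding k0_def by simp
  qed
  have pb: "\<forall>a\<in>bsyms F. a < k0"
  proof
    fix a assume "a \<in> bsyms F"
    then have "a \<le> Max (insert 0 (bsyms F))" by (simp add: syms_finite)
    then show "a < k0" unfolding k0_def by simp
  qed
  note I = trans_inv[OF iF pu pb t]
  have r: "\<And>D U B v. env_ok D U B v \<Longrightarrow> sem D U B v F =
      (\<exists>U' B'. agr U U' {k0..<k'} \<and> agr B B' {k0..<k'} \<and> env_ok D U' B' v \<and> sem D U' B' v g)"
    using I by blast
  show "C2 (translate F)" using I tr by blast
  show "sat (translate F) \<longleftrightarrow> sat F"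
  proof
    assume "sat (translate F)"
    then obtain D U B v where e: "env_ok D U B v" "sem D U B v g" unfolding sat_def tr by blast
    have "agr U U {k0..<k'}" "agr B B {k0..<k'}" by (auto simp: agr_def)
    then have "sem D U B v F" using r[OF e(1)] e by blast
    then show "sat F" using e unfolding sat_def by blast
  next
    assume "sat F"
    then obtain D U B v where e: "env_ok D U B v" "sem D U B v F" unfolding sat_def by blast
    then show "sat (translate F)" using r[OF e(1)] unfolding sat_def tr by blast
  qed
qed

end
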